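(* Let $A$ be a finite nonempty set of positive real numbers. Then $$\left|\frac{A+A}{A+A}\right|\geq 2|A|^2-1.$$
   Context: For a finite set $A\subset\mathbb{R}$ of positive reals, $\frac{A+A}{A+A}:=\left\{\frac{a+b}{c+d}: a,b,c,d\in A\right\}$. $|X|$ denotes the cardinality of a finite set $X$. *)

theory Defs
  imports Complex_Main
begin

definition sum_ratio_set :: "real set \<Rightarrow> real set" where
  "sum_ratio_set A = {(a + b) / (c + d) | a b c d. a \<in> A \<and> b \<in> A \<and> c \<in> A \<and> d \<in> A}"

end

theory Submission
  imports Defs
begin

definition sl :: "real \<times> real \<Rightarrow> real" where "sl p = snd p / fst p"
definition padd :: "real \<times> real \<Rightarrow> real \<times> real \<Rightarrow> real \<times> real" where
  "padd p q = (fst p + fst q, snd p + snd q)"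
definition SS :: "(real \<times> real) set \<Rightarrow> real set" where
  "SS P = {sl (padd p q) | p q. p \<in> P \<and> q \<in> P}"
definition pos :: "(real \<times> real) set \<Rightarrow> bool" where
  "pos P = (\<forall>p\<in>P. fst p > 0 \<and> snd p > 0)"

lemma SS_finite: "finite P \<Longrightarrow> finite (SS P)"
proof -
  assume "finite P"
  have "SS P = (\<lambda>(p,q). sl (padd p q)) ` (P \<times> P)" unfolding SS_def by auto
  thus ?thesis using \<open>finite P\<close> by simp
qed

lemma frac_cmp:
  fixes a b x y x' y' :: real
  assumes "a < b" "x > 0" "y > 0" "x' > 0" "y' > 0"
  shows "(a*x+b*y)/(x+y) < (a*x'+b*y')/(x'+y') \<longleftrightarrow> y*x' < y'*x"
proof -
  have "(a*x+b*y)/(x+y) < (a*x'+b*y')/(x'+y') \<longleftrightarrow> (a*x+b*y)*(x'+y') < (a*x'+b*y')*(x+y)"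
    using assms by (simp add: divide_less_eq less_divide_eq field_simps)
  also have "\<dots> \<longleftrightarrow> (b-a)*(y*x') < (b-a)*(y'*x)"
    by (simp add: algebra_simps)
  also have "\<dots> \<longleftrightarrow> y*x' < y'*x" using assms by simp
  finally show ?thesis .
qed

lemma sl_padd_line:
  assumes "sl p = a" "sl q = b" "fst p > 0" "fst q > 0"
  shows "sl (padd p q) = (a * fst p + b * fst q) / (fst p + fst q)"
proof -
  have "snd p = a * fst p" "snd q = b * fst q" using assms by (auto simp: sl_def field_simps)
  thus ?thesis using assms by (simp add: sl_def padd_def algebra_simps)
qed

lemma cmp:
  assumes "sl p = a" "sl q = b" "sl p' = a" "sl q' = b" "a < b"
    "fst p > 0" "fst q > 0" "fst p' > 0" "fst q' > 0"
  shows "sl (padd p q) < sl (padd p' q') \<longleftrightarrow> fst q * fst p' < fst q' * fst p"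
  using assms sl_padd_line frac_cmp by simp

lemma line_eq:
  assumes "sl p = a" "sl p' = a" "fst p > 0" "fst p' > 0" "fst p = fst p'"
  shows "p = p'"
proof -
  have "snd p = a * fst p" "snd p' = a * fst p'" using assms by (auto simp: sl_def field_simps)
  thus ?thesis using assms by (simp add: prod_eq_iff)
qed

lemma two_lines:
  assumes "finite L1" "finite L2" "L1 \<noteq> {}" "L2 \<noteq> {}" "pos L1" "pos L2"
    "\<forall>p\<in>L1. sl p = a" "\<forall>q\<in>L2. sl q = b" "a < b"
  shows "card L1 + card L2 - 1 \<le> card {sl (padd p q) | p q. p \<in> L1 \<and> q \<in> L2}"
proof -
  let ?h = "\<lambda>p q. sl (padd p q)"
  have fp: "\<And>p. p \<in> L1 \<Longrightarrow> fst p > 0" "\<And>p. p \<in> L2 \<Longrightarrow> fst p > 0"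
    using assms(5,6) unfolding pos_def by auto
  obtain p0 where p0: "p0 \<in> L1" "\<forall>p\<in>L1. fst p0 \<le> fst p"
  proof -
    have "Min (fst ` L1) \<in> fst ` L1" using assms by simp
    then obtain p0 where "p0 \<in> L1" "fst p0 = Min (fst ` L1)" by auto
    thus ?thesis using that assms(1) by auto
  qed
  obtain q0 where q0: "q0 \<in> L2" "\<forall>q\<in>L2. fst q0 \<le> fst q"
  proof -
    have "Min (fst ` L2) \<in> fst ` L2" using assms by simp
    then obtain q0 where "q0 \<in> L2" "fst q0 = Min (fst ` L2)" by auto
    thus ?thesis using that assms(2) by auto
  qed
  define U where "U = (\<lambda>q. ?h p0 q) ` L2"
  define V where "V = (\<lambda>p. ?h p q0) ` L1"
  have c: "\<And>p q p' q'. p \<in> L1 \<Longrightarrow> q \<in> L2 \<Longrightarrow> p' \<in> L1 \<Longrightarrow> q' \<in> L2 \<Longrightarrow>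
      ?h p q < ?h p' q' \<longleftrightarrow> fst q * fst p' < fst q' * fst p"
    using cmp assms(7,8,9) fp by blast
  have injU: "inj_on (\<lambda>q. ?h p0 q) L2"
  proof (rule inj_onI)
    fix q q' assume a: "q \<in> L2" "q' \<in> L2" "?h p0 q = ?h p0 q'"
    have "\<not> fst q * fst p0 < fst q' * fst p0" "\<not> fst q' * fst p0 < fst q * fst p0"
      using c[OF p0(1) a(1) p0(1) a(2)] c[OF p0(1) a(2) p0(1) a(1)] a(3) by auto
    hence "fst q = fst q'" using fp(1)[OF p0(1)] by auto
    thus "q = q'" using line_eq a assms(8) fp by metis
  qed
  have injV: "inj_on (\<lambda>p. ?h p q0) L1"
  proof (rule inj_onI)
    fix p p' assume a: "p \<in> L1" "p' \<in> L1" "?h p q0 = ?h p' q0"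
    have "\<not> fst q0 * fst p' < fst q0 * fst p" "\<not> fst q0 * fst p < fst q0 * fst p'"
      using c[OF a(1) q0(1) a(2) q0(1)] c[OF a(2) q0(1) a(1) q0(1)] a(3) by auto
    hence "fst p = fst p'" using fp(2)[OF q0(1)] by auto
    thus "p = p'" using line_eq a assms(7) fp by metis
  qed
  have UV: "U \<inter> V \<subseteq> {?h p0 q0}"
  proof
    fix v assume "v \<in> U \<inter> V"
    then obtain p q where pq: "p \<in> L1" "q \<in> L2" "v = ?h p0 q" "v = ?h p q0"
      unfolding U_def V_def by auto
    have "\<not> ?h p0 q < ?h p0 q0"
      using c[OF p0(1) pq(2) p0(1) q0(1)] q0(2) pq(2) fp(1)[OF p0(1)]
      by (simp add: mult_right_mono not_less)
    moreover have "\<not> ?h p0 q0 < ?h p q0"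
      using c[OF p0(1) q0(1) pq(1) q0(1)] p0(2) pq(1) fp(2)[OF q0(1)]
      by (simp add: mult_left_mono not_less)
    ultimately show "v \<in> {?h p0 q0}" using pq by auto
  qed
  have fin: "finite U" "finite V" using assms(1,2) U_def V_def by auto
  have i: "card (U \<inter> V) \<le> 1" using card_mono[OF _ UV] by simp
  have u: "card U + card V = card (U \<union> V) + card (U \<inter> V)"
    using card_Un_Int fin by blast
  have cu: "card U = card L2" "card V = card L1"
    using card_image injU injV U_def V_def by auto
  have sub: "U \<union> V \<subseteq> {sl (padd p q) | p q. p \<in> L1 \<and> q \<in> L2}"
    unfolding U_def V_def using p0(1) q0(1) by blast
  have fT: "finite {sl (padd p q) | p q. p \<in> L1 \<and> q \<in> L2}"
  proof -
    have "{sl (padd p q) | p q. p \<in> L1 \<and> q \<in> L2} = (\<lambda>(p,q). sl (padd p q)) ` (L1 \<times> L2)"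
      by auto
    thus ?thesis using assms(1,2) by simp
  qed
  have "card (U \<union> V) \<le> card {sl (padd p q) | p q. p \<in> L1 \<and> q \<in> L2}"
    using card_mono[OF fT sub] .
  thus ?thesis using i u cu by linarith
qed

lemma r1: fixes a b x y :: real assumes "a < b" "x > 0" "y > 0"
  shows "a < (a*x+b*y)/(x+y)" "(a*x+b*y)/(x+y) < b"
proof -
  have "a*(x+y) < a*x+b*y" using assms by (simp add: algebra_simps)
  thus "a < (a*x+b*y)/(x+y)" using assms by (simp add: less_divide_eq)
  have "a*x+b*y < b*(x+y)" using assms by (simp add: algebra_simps)
  thus "(a*x+b*y)/(x+y) < b" using assms by (simp add: divide_less_eq)
qed

lemma r2: fixes M x y u v :: real assumes "u \<le> M * x" "v \<le> M*y" "x > 0" "y > 0"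
  shows "(u+v)/(x+y) \<le> M"
proof -
  have "u+v \<le> M*(x+y)" using assms by (simp add: algebra_simps)
  thus ?thesis using assms by (simp add: divide_le_eq)
qed

lemma med_le:
  assumes "sl p \<le> M" "sl q \<le> M" "fst p > 0" "fst q > 0"
  shows "sl (padd p q) \<le> M"
proof -
  have "snd p / fst p \<le> M" "snd q / fst q \<le> M" using assms(1,2) by (simp_all add: sl_def)
  hence "snd p \<le> M * fst p" "snd q \<le> M * fst q" using assms(3,4) by (simp_all add: divide_le_eq)
  hence "(snd p + snd q) / (fst p + fst q) \<le> M" using r2 assms(3,4) by blast
  thus ?thesis by (simp add: sl_def padd_def)
qed

lemma med_lt:
  assumes "sl p < sl q" "fst p > 0" "fst q > 0"
  shows "sl p < sl (padd p q)" "sl (padd p q) < sl q"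
proof -
  have e: "sl (padd p q) = (sl p * fst p + sl q * fst q) / (fst p + fst q)"
    using sl_padd_line[OF refl refl assms(2,3)] .
  show "sl p < sl (padd p q)" "sl (padd p q) < sl q" unfolding e using r1[OF assms] by auto
qed

lemma med_eq:
  assumes "sl p = m" "sl q = m" "fst p > 0" "fst q > 0"
  shows "sl (padd p q) = m"
proof -
  have "sl (padd p q) = (m * fst p + m * fst q) / (fst p + fst q)" using sl_padd_line assms by simp
  also have "\<dots> = m" using assms by (simp add: field_simps)
  finally show ?thesis .
qed

lemma main:
  "finite P \<Longrightarrow> P \<noteq> {} \<Longrightarrow> pos P \<Longrightarrow>
   2 * card P + 1 \<le> card (SS P) + card {p\<in>P. sl p = Min (sl ` P)} + card {p\<in>P. sl p = Max (sl ` P)}"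
proof (induction "card (sl ` P)" arbitrary: P rule: less_induct)
  case less
  have fP: "\<And>p. p \<in> P \<Longrightarrow> fst p > 0" using less.prems(3) unfolding pos_def by auto
  have finS: "finite (sl ` P)" "sl ` P \<noteq> {}" using less.prems by auto
  show ?case
  proof (cases "card (sl ` P) = 1")
    case True
    then obtain m where m: "sl ` P = {m}" using card_1_singletonE by blast
    have "{p\<in>P. sl p = Min (sl ` P)} = P" "{p\<in>P. sl p = Max (sl ` P)} = P" using m by auto
    moreover have "SS P \<noteq> {}" using less.prems(2) unfolding SS_def by blast
    hence "card (SS P) \<ge> 1" using SS_finite[OF less.prems(1)]
      by (simp add: Suc_leI card_gt_0_iff)
    ultimately show ?thesis by simp
  next
    case False
    hence c2: "card (sl ` P) \<ge> 2" using finS card_0_eq by fastforce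
    define M where "M = Max (sl ` P)"
    define L where "L = {p\<in>P. sl p = M}"
    define P' where "P' = P - L"
    have MP: "M \<in> sl ` P" using finS M_def by simp
    have slP': "sl ` P' = sl ` P - {M}" unfolding P'_def L_def by auto
    have cP': "card (sl ` P') < card (sl ` P)"
      using slP' MP finS c2 by (simp add: card_Diff1_less)
    have ne': "P' \<noteq> {}"
    proof
      assume "P' = {}"
      hence "sl ` P \<subseteq> {M}" using slP' by auto
      hence "card (sl ` P) \<le> 1" using card_mono[of "{M}" "sl ` P"] by simp
      thus False using c2 by simp
    qed
    have fin': "finite P'" using less.prems(1) P'_def by simp
    have pos': "pos P'" using less.prems(3) P'_def unfolding pos_def by auto
    have IH: "2 * card P' + 1 \<le> card (SS P') + card {p\<in>P'. sl p = Min (sl ` P')} + card {p\<in>P'. sl p = Max (sl ` P')}"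
      using less.hyps[OF cP' fin' ne' pos'] .
    define M' where "M' = Max (sl ` P')"
    define L' where "L' = {p\<in>P'. sl p = M'}"
    have fS': "finite (sl ` P')" "sl ` P' \<noteq> {}" using fin' ne' by auto
    have M'P: "M' \<in> sl ` P'" using fS' M'_def by simp
    have M'M: "M' < M"
    proof -
      have "M' \<in> sl ` P" "M' \<noteq> M" using M'P slP' by auto
      moreover have "M' \<le> M" using M_def finS \<open>M' \<in> sl ` P\<close> by simp
      ultimately show ?thesis by simp
    qed
    have minP: "Min (sl ` P') = Min (sl ` P)"
    proof -
      have "Min (sl ` P) \<in> sl ` P" using finS by simp
      moreover have "Min (sl ` P) \<noteq> M"
      proof
        assume "Min (sl ` P) = M"
        have "\<forall>x\<in>sl ` P. x = M"
        proof
          fix x assume "x \<in> sl ` P"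
          hence "Min (sl ` P) \<le> x" "x \<le> M" using finS M_def by auto
          thus "x = M" using \<open>Min (sl ` P) = M\<close> by simp
        qed
        hence "sl ` P \<subseteq> {M}" by auto
        hence "card (sl ` P) \<le> 1" using card_mono[of "{M}" "sl ` P"] by simp
        thus False using c2 by simp
      qed
      ultimately have "Min (sl ` P) \<in> sl ` P'" using slP' by auto
      moreover have "sl ` P' \<subseteq> sl ` P" using slP' by auto
      ultimately have "Min (sl ` P') \<le> Min (sl ` P)" "Min (sl ` P) \<le> Min (sl ` P')"
        using Min_le[OF fS'(1)] Min_antimono[OF _ fS'(2) finS(1)] by blast+
      thus ?thesis by simp
    qed
    have Lmin: "{p\<in>P'. sl p = Min (sl ` P')} = {p\<in>P. sl p = Min (sl ` P)}"
    proof -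
      have "Min (sl ` P') \<le> M'" using fS' M'_def by simp
      hence "Min (sl ` P) \<noteq> M" using minP M'M by simp
      thus ?thesis using minP unfolding P'_def L_def by auto
    qed
    have Lmax: "{p\<in>P. sl p = Max (sl ` P)} = L" unfolding L_def M_def by simp
    have cardP: "card P = card P' + card L"
    proof -
      have "P = P' \<union> L" "P' \<inter> L = {}" unfolding P'_def L_def by auto
      moreover have "finite L" "finite P'" using less.prems(1) L_def P'_def by auto
      ultimately show ?thesis using card_Un_disjoint[of P' L] by simp
    qed
    define T where "T = {sl (padd p q) | p q. p \<in> L' \<and> q \<in> L}"
    have finL: "finite L" "finite L'" using less.prems(1) L_def L'_def P'_def by auto
    have neL: "L \<noteq> {}" using MP L_def by auto
    have neL': "L' \<noteq> {}" using M'P L'_def by auto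
    have posL: "pos L" "pos L'" using less.prems(3) L_def L'_def P'_def unfolding pos_def by auto
    have cT: "card L' + card L - 1 \<le> card T"
      unfolding T_def
      by (rule two_lines[OF finL(2) finL(1) neL' neL posL(2) posL(1) _ _ M'M]) (auto simp: L_def L'_def)
    have LP: "L \<subseteq> P" "L' \<subseteq> P" "P' \<subseteq> P" unfolding L_def L'_def P'_def by auto
    have sub: "SS P' \<union> T \<union> {M} \<subseteq> SS P"
    proof -
      have "SS P' \<subseteq> SS P" using LP unfolding SS_def by blast
      moreover have "T \<subseteq> SS P" using LP unfolding SS_def T_def by blast
      moreover have "M \<in> SS P"
      proof -
        obtain p where p: "p \<in> L" using neL by auto
        have "sl (padd p p) = M" using med_eq p L_def fP by auto
        thus ?thesis using p L_def unfolding SS_def by blast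
      qed
      ultimately show ?thesis by blast
    qed
    have d1: "SS P' \<inter> T = {}"
    proof -
      have "\<forall>x\<in>SS P'. x \<le> M'"
      proof
        fix x assume "x \<in> SS P'"
        then obtain p q where "p \<in> P'" "q \<in> P'" "x = sl (padd p q)" unfolding SS_def by auto
        moreover have "sl p \<le> M'" "sl q \<le> M'" using calculation fS' M'_def by auto
        moreover have "fst p > 0" "fst q > 0" using calculation(1,2) LP fP by blast+
        ultimately show "x \<le> M'" using med_le[of p M' q] by simp
      qed
      moreover have "\<forall>x\<in>T. M' < x"
      proof
        fix x assume "x \<in> T"
        then obtain p q where pq: "p \<in> L'" "q \<in> L" "x = sl (padd p q)" unfolding T_def by auto
        have "sl p < sl q" using pq L_def L'_def M'M by auto
        moreover have "fst p > 0" "fst q > 0" using pq LP fP unfolding L_def L'_def P'_def by blast+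
        ultimately have "sl p < x" using med_lt(1)[of p q] pq by simp
        thus "M' < x" using pq L'_def by simp
      qed
      ultimately show ?thesis by fastforce
    qed
    have d2: "(SS P' \<union> T) \<inter> {M} = {}"
    proof -
      have "M \<notin> SS P'"
      proof
        assume "M \<in> SS P'"
        then obtain p q where "p \<in> P'" "q \<in> P'" "M = sl (padd p q)" unfolding SS_def by auto
        moreover have "sl p \<le> M'" "sl q \<le> M'" using calculation fS' M'_def by auto
        moreover have "fst p > 0" "fst q > 0" using calculation(1,2) LP fP by blast+
        ultimately have "M \<le> M'" using med_le[of p M' q] by simp
        thus False using M'M by simp
      qed
      moreover have "M \<notin> T"
      proof
        assume "M \<in> T"
        then obtain p q where pq: "p \<in> L'" "q \<in> L" "M = sl (padd p q)" unfolding T_def by auto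
        have "sl p < sl q" using pq L_def L'_def M'M by auto
        moreover have "fst p > 0" "fst q > 0" using pq LP fP unfolding L_def L'_def P'_def by blast+
        ultimately have "M < sl q" using med_lt(2)[of p q] pq by simp
        thus False using pq L_def by simp
      qed
      ultimately show ?thesis by auto
    qed
    have finT: "finite T"
    proof -
      have "T = (\<lambda>(p,q). sl (padd p q)) ` (L' \<times> L)" unfolding T_def by auto
      thus ?thesis using finL by simp
    qed
    have "card (SS P' \<union> T \<union> {M}) = card (SS P') + card T + 1"
      using card_Un_disjoint[OF _ finT d1] card_Un_disjoint[OF _ _ d2] SS_finite[OF fin'] finT
      by simp
    moreover have "card (SS P' \<union> T \<union> {M}) \<le> card (SS P)"
      using card_mono[OF SS_finite[OF less.prems(1)] sub] .
    ultimately have "card (SS P') + card T + 1 \<le> card (SS P)" by simp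
    moreover have "card L \<ge> 1" "card L' \<ge> 1" using finL neL neL'
      by (simp_all add: Suc_leI card_gt_0_iff)
    moreover have e1: "card {p\<in>P'. sl p = Max (sl ` P')} = card L'" by (simp add: L'_def M'_def)
    moreover have e2: "card {p\<in>P'. sl p = Min (sl ` P')} = card {p\<in>P. sl p = Min (sl ` P)}"
      using Lmin by simp
    moreover have e3: "card {p\<in>P. sl p = Max (sl ` P)} = card L" using Lmax by simp
    ultimately show ?thesis using IH cT cardP by linarith
  qed
qed

lemma ext_min:
  fixes m a c M :: real
  assumes "0 < m" "m \<le> a" "0 < c" "c \<le> M" "a / c \<le> m / M"
  shows "a = m \<and> c = M"
proof -
  have M0: "0 < M" using assms by simp
  have h1: "a * M \<le> m * c" using assms(5) assms(3) M0 by (simp add: field_simps)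
  have h2: "m * M \<le> a * M" using assms(2) M0 by simp
  have h3: "m * c \<le> m * M" using assms(4) assms(1) by simp
  have "a * M = m * M" "m * c = m * M" using h1 h2 h3 by linarith+
  thus ?thesis using M0 assms(1) by simp
qed

lemma ext_max:
  fixes m a c M :: real
  assumes "0 < m" "m \<le> c" "0 < a" "a \<le> M" "M / m \<le> a / c"
  shows "a = M \<and> c = m"
proof -
  have c0: "0 < c" using assms by simp
  have h1: "M * c \<le> a * m" using assms(5) assms(1) c0 by (simp add: field_simps)
  have h2: "a * m \<le> M * m" using assms(4) assms(1) by simp
  have h3: "M * m \<le> M * c" using assms(2) assms(3,4) by simp
  have "a * m = M * m" "M * c = M * m" using h1 h2 h3 by linarith+
  thus ?thesis using c0 assms(1,3,4) by simp
qed

lemma SR_finite: "finite A \<Longrightarrow> finite (sum_ratio_set A)"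
proof -
  assume f: "finite A"
  have "sum_ratio_set A = (\<lambda>(a,b,c,d). (a+b)/(c+d)) ` (A \<times> A \<times> A \<times> A)"
    unfolding sum_ratio_set_def by force
  thus ?thesis using f by simp
qed

theorem theorem1:
  fixes A :: "real set"
  assumes "finite A" and "A \<noteq> {}" and "\<forall>x\<in>A. x > 0"
  shows "real (card (sum_ratio_set A)) \<ge> 2 * real (card A) ^ 2 - 1"
proof -
  define P where "P = A \<times> A"
  have fP: "finite P" "P \<noteq> {}" using assms P_def by auto
  have pP: "pos P" using assms(3) unfolding pos_def P_def by auto
  have M: "2 * card P + 1 \<le> card (SS P) + card {p\<in>P. sl p = Min (sl ` P)} + card {p\<in>P. sl p = Max (sl ` P)}"
    using main[OF fP pP] .
  have fsl: "finite (sl ` P)" using fP by simp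
  have mA: "Min A \<in> A" "Max A \<in> A" using assms(1,2) by auto
  have m0: "0 < Min A" using mA assms(3) by auto
  have c1: "{p\<in>P. sl p = Min (sl ` P)} \<subseteq> {(Max A, Min A)}"
  proof
    fix p assume p: "p \<in> {p\<in>P. sl p = Min (sl ` P)}"
    obtain c a where ca: "p = (c, a)" by force
    have "c \<in> A" "a \<in> A" using p ca P_def by auto
    hence b: "Min A \<le> a" "c \<le> Max A" "0 < c" using assms by auto
    have "(Max A, Min A) \<in> P" using mA P_def by simp
    hence "Min (sl ` P) \<le> sl (Max A, Min A)" using fsl by simp
    hence "a / c \<le> Min A / Max A" using p ca by (simp add: sl_def)
    hence "a = Min A \<and> c = Max A" using ext_min[OF m0 b(1) b(3) b(2)] by simp
    thus "p \<in> {(Max A, Min A)}" using ca by simp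
  qed
  have c2: "{p\<in>P. sl p = Max (sl ` P)} \<subseteq> {(Min A, Max A)}"
  proof
    fix p assume p: "p \<in> {p\<in>P. sl p = Max (sl ` P)}"
    obtain c a where ca: "p = (c, a)" by force
    have "c \<in> A" "a \<in> A" using p ca P_def by auto
    hence b: "Min A \<le> c" "a \<le> Max A" "0 < a" using assms by auto
    have "(Min A, Max A) \<in> P" using mA P_def by simp
    hence "sl (Min A, Max A) \<le> Max (sl ` P)" using fsl by simp
    hence "Max A / Min A \<le> a / c" using p ca by (simp add: sl_def)
    hence "a = Max A \<and> c = Min A" using ext_max[OF m0 b(1) b(3) b(2)] by simp
    thus "p \<in> {(Min A, Max A)}" using ca by simp
  qed
  have k1: "card {p\<in>P. sl p = Min (sl ` P)} \<le> 1" using card_mono[OF _ c1] by simp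
  have k2: "card {p\<in>P. sl p = Max (sl ` P)} \<le> 1" using card_mono[OF _ c2] by simp
  have sub: "SS P \<subseteq> sum_ratio_set A"
  proof
    fix x assume "x \<in> SS P"
    then obtain p q where pq: "p \<in> P" "q \<in> P" "x = sl (padd p q)" unfolding SS_def by auto
    obtain c a d b where "p = (c,a)" "q = (d,b)" by force
    hence "x = (a+b)/(c+d)" "a \<in> A" "b \<in> A" "c \<in> A" "d \<in> A" using pq P_def
      by (auto simp: sl_def padd_def)
    thus "x \<in> sum_ratio_set A" unfolding sum_ratio_set_def by blast
  qed
  have k3: "card (SS P) \<le> card (sum_ratio_set A)" using card_mono[OF SR_finite[OF assms(1)] sub] .
  have cP: "card P = card A * card A" using P_def card_cartesian_product by blast
  have "2 * (card A * card A) \<le> card (sum_ratio_set A) + 1" using M k1 k2 k3 cP by linarith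
  hence "real (2 * (card A * card A)) \<le> real (card (sum_ratio_set A) + 1)" by (simp only: of_nat_le_iff)
  thus ?thesis by (simp add: power2_eq_square)
qed

end
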